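(* Let $\gamma:[0,1]\to\mathbb{R}^2$ be a $C^1$ curve of constant speed $c>0$ with $\gamma(0)\neq\gamma(1)$, whose turning angle function $\theta$ satisfies $\theta(1)-\theta(0)=2\pi m$ with $0\neq m\in\mathbb{Z}$. Let $\sigma\in S_k$ and $z_h\in Z_k$. Then $\gamma$ is $(k,1)$-rearrangeable with respect to $\sigma$ if and only if $\gamma$ is $(k,1)$-rearrangeable with respect to the composition $\sigma\cdot z_h$ (defined by $(\sigma\cdot z_h)(i)=\sigma(z_h(i))$).
   Context: A turning angle function is a continuous $\theta$ with $\gamma'(s)=c(\cos\theta(s),\sin\theta(s))$. Concatenation $\alpha*\beta$ of two $C^1$ planar curves of the same constant speed ($\alpha$ on $[a_1,b_1]$, $\beta$ on $[a_2,b_2]$) is the curve equal to $\alpha(s+a_1)$ for $s\le b_1-a_1$ and to $T(\beta(s-(b_1-a_1)+a_2))$ afterwards, where $T$ is the orientation-preserving rigid motion sending $\beta(a_2)$ to $\alpha(b_1)$ and the unit tangent of $\beta$ at $a_2$ to that of $\alpha$ at $b_1$; it is associative. Let $D_k=\{(c_1,\dots,c_{k-1})\in[0,1]^{k-1}: 0\le c_1\le\dots\le c_{k-1}\le 1\}$; set $c_0=0$, $c_k=1$. For $C\in D_k$ let $\gamma_i$ be the restriction of $\gamma$ to $[c_{i-1},c_i]$ (degenerate arcs are points carrying the tangent direction of $\gamma$). For $\sigma\in S_k$, $r_{\sigma,C}:=\gamma_{\sigma(1)}*\dots*\gamma_{\sigma(k)}$ over $[0,1]$. $\gamma$ is $(k,1)$-rearrangeable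 with respect to $\sigma$ if there exist $C\in D_k$ such that $r_{\sigma,C}$ is a closed $C^1$ curve (end point equals start point and the tangents there agree). $Z_k=\{z_0,\dots,z_{k-1}\}$ with $z_h(i)=i+h$ if $i\le k-h$ and $z_h(i)=i+h-k$ if $i>k-h$. *)

theory Defs
  imports "HOL-Analysis.Analysis" "HOL-Combinatorics.Permutations"
begin

definition velocity :: "(real \<Rightarrow> complex) \<Rightarrow> real \<Rightarrow> complex" where
  "velocity \<gamma> t = vector_derivative \<gamma> (at t within {0..1})"

definition C1_curve :: "(real \<Rightarrow> complex) \<Rightarrow> bool" where
  "C1_curve \<gamma> \<longleftrightarrow> (\<forall>t\<in>{0..1}. \<gamma> differentiable (at t within {0..1})) \<and>
     continuous_on {0..1} (velocity \<gamma>)"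

text \<open>An arc is a quadruple (p, d, a, b): the position map p on [a,b] together with
its unit tangent direction d (so that degenerate arcs a = b still carry a tangent).\<close>

type_synonym arc = "(real \<Rightarrow> complex) \<times> (real \<Rightarrow> complex) \<times> real \<times> real"

text \<open>Concatenation alpha * beta: the result lives on [0, (b1-a1)+(b2-a2)];
T z = alpha(b1) + u (z - beta(a2)) with u the rotation taking the unit tangent of beta
at a2 to that of alpha at b1.\<close>

definition concat_arc :: "arc \<Rightarrow> arc \<Rightarrow> arc" where
  "concat_arc A B = (case A of (p1, d1, a1, b1) \<Rightarrow> case B of (p2, d2, a2, b2) \<Rightarrow>
     (let u = d1 b1 / d2 a2; T = (\<lambda>z. p1 b1 + u * (z - p2 a2)); L1 = b1 - a1 in
      (\<lambda>s. if s \<le> L1 then p1 (s + a1) else T (p2 (s - L1 + a2)),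
       \<lambda>s. if s \<le> L1 then d1 (s + a1) else u * d2 (s - L1 + a2),
       0, L1 + (b2 - a2))))"

fun concat_list :: "arc list \<Rightarrow> arc" where
  "concat_list [] = undefined"
| "concat_list [A] = A"
| "concat_list (A # B # As) = concat_arc A (concat_list (B # As))"

definition piece :: "(real \<Rightarrow> complex) \<Rightarrow> (nat \<Rightarrow> real) \<Rightarrow> nat \<Rightarrow> arc" where
  "piece \<gamma> c i = (\<gamma>, \<lambda>t. sgn (velocity \<gamma> t), c (i - 1), c i)"

definition rearr :: "(real \<Rightarrow> complex) \<Rightarrow> nat \<Rightarrow> (nat \<Rightarrow> nat) \<Rightarrow> (nat \<Rightarrow> real) \<Rightarrow> arc" where
  "rearr \<gamma> k \<sigma> c = concat_list (map (\<lambda>j. piece \<gamma> c (\<sigma> j)) [1..<k+1])"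

definition closed_arc :: "arc \<Rightarrow> bool" where
  "closed_arc A = (case A of (p, d, a, b) \<Rightarrow> p 0 = p 1 \<and> d 0 = d 1)"

text \<open>C in D_k is encoded as c :: nat => real with c 0 = 0, c k = 1, monotone on 0..k.\<close>

definition in_Dk :: "nat \<Rightarrow> (nat \<Rightarrow> real) \<Rightarrow> bool" where
  "in_Dk k c \<longleftrightarrow> c 0 = 0 \<and> c k = 1 \<and> (\<forall>i<k. c i \<le> c (Suc i))"

definition rearrangeable :: "nat \<Rightarrow> (real \<Rightarrow> complex) \<Rightarrow> (nat \<Rightarrow> nat) \<Rightarrow> bool" where
  "rearrangeable k \<gamma> \<sigma> \<longleftrightarrow> (\<exists>c. in_Dk k c \<and> closed_arc (rearr \<gamma> k \<sigma> c))"

definition zrot :: "nat \<Rightarrow> nat \<Rightarrow> nat \<Rightarrow> nat" where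
  "zrot k h i = (if i \<le> k - h then i + h else i + h - k)"

end

theory Submission
  imports Defs
begin
definition aA :: "arc \<Rightarrow> real" where "aA A = fst (snd (snd A))"
definition bA :: "arc \<Rightarrow> real" where "bA A = snd (snd (snd A))"
definition pA :: "arc \<Rightarrow> real \<Rightarrow> complex" where "pA A = fst A"
definition dA :: "arc \<Rightarrow> real \<Rightarrow> complex" where "dA A = fst (snd A)"
definition good :: "arc \<Rightarrow> bool" where
  "good A \<longleftrightarrow> aA A \<le> bA A \<and> dA A (aA A) \<noteq> 0 \<and> dA A (bA A) \<noteq> 0"
definition mot :: "arc \<Rightarrow> complex \<times> complex" where
  "mot A = ((pA A (bA A) - pA A (aA A)) / dA A (aA A), dA A (bA A) / dA A (aA A))"
definition mult :: "complex \<times> complex \<Rightarrow> complex \<times> complex \<Rightarrow> complex \<times> complex" where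
  "mult x y = (fst x + snd x * fst y, snd x * snd y)"

lemma hA: "(x1::complex) \<noteq> 0 \<Longrightarrow> x2 \<noteq> 0 \<Longrightarrow> (q1 + y1 / x2 * (r - s) - q0) / x1 = (q1 - q0) / x1 + y1 / x1 * ((r - s) / x2)"
  by (simp add: field_simps)
lemma hB: "(x1::complex) \<noteq> 0 \<Longrightarrow> x2 \<noteq> 0 \<Longrightarrow> y1 / x2 * y2 / x1 = y1 / x1 * (y2 / x2)"
  by (simp add: field_simps)

lemma concat_props:
  assumes "good A" "good B"
  shows "good (concat_arc A B) \<and> mot (concat_arc A B) = mult (mot A) (mot B)
    \<and> bA (concat_arc A B) - aA (concat_arc A B) = (bA A - aA A) + (bA B - aA B)
    \<and> aA (concat_arc A B) = 0"
proof -
  obtain p1 d1 a1 b1 where A: "A = (p1, d1, a1, b1)" by (cases A) auto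
  obtain p2 d2 a2 b2 where B: "B = (p2, d2, a2, b2)" by (cases B) auto
  have g: "a1 \<le> b1" "d1 a1 \<noteq> 0" "d1 b1 \<noteq> 0" "a2 \<le> b2" "d2 a2 \<noteq> 0" "d2 b2 \<noteq> 0"
    using assms by (auto simp: A B good_def aA_def bA_def dA_def)
  define u where "u = d1 b1 / d2 a2"
  define L1 where "L1 = b1 - a1"
  define P where "P = (\<lambda>s. if s \<le> L1 then p1 (s + a1) else p1 b1 + u * (p2 (s - L1 + a2) - p2 a2))"
  define D where "D = (\<lambda>s. if s \<le> L1 then d1 (s + a1) else u * d2 (s - L1 + a2))"
  have C: "concat_arc A B = (P, D, 0, L1 + (b2 - a2))"
    unfolding P_def D_def u_def L1_def by (simp add: A B concat_arc_def Let_def)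
  have L1: "0 \<le> L1" using g by (simp add: L1_def)
  have P0: "P 0 = p1 a1" "D 0 = d1 a1" using L1 by (auto simp: P_def D_def)
  have u: "u \<noteq> 0" using g by (simp add: u_def)
  have PE: "P (L1 + (b2 - a2)) = p1 b1 + u * (p2 b2 - p2 a2) \<and> D (L1 + (b2 - a2)) = u * d2 b2"
  proof (cases "a2 = b2")
    case True
    then show ?thesis using g by (simp add: P_def D_def L1_def u_def)
  next
    case False
    then have "\<not> L1 + (b2 - a2) \<le> L1" using g by simp
    then show ?thesis by (simp add: P_def D_def)
  qed
  have m: "mult (mot A) (mot B) = ((p1 b1 - p1 a1) / d1 a1 + d1 b1 / d1 a1 * ((p2 b2 - p2 a2) / d2 a2),
       d1 b1 / d1 a1 * (d2 b2 / d2 a2))"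
    by (simp add: A B mot_def mult_def aA_def bA_def dA_def pA_def)
  have "mot (concat_arc A B) = ((p1 b1 + u * (p2 b2 - p2 a2) - p1 a1) / d1 a1, u * d2 b2 / d1 a1)"
    using PE P0 by (simp add: C mot_def aA_def bA_def dA_def pA_def)
  also have "\<dots> = mult (mot A) (mot B)" unfolding m u_def prod.inject
    using hA[OF g(2) g(5)] hB[OF g(2) g(5)] by blast
  finally have M: "mot (concat_arc A B) = mult (mot A) (mot B)" .
  have "u * d2 b2 \<noteq> 0" using u g by simp
  then have G: "good (concat_arc A B)" using PE P0 g L1
    unfolding C good_def aA_def bA_def dA_def fst_conv snd_conv by simp
  have "bA A - aA A = L1" "bA B - aA B = b2 - a2" by (simp_all add: A B aA_def bA_def L1_def)
  moreover have "aA (concat_arc A B) = 0" "bA (concat_arc A B) = L1 + (b2 - a2)"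
    by (simp_all only: C aA_def bA_def fst_conv snd_conv)
  ultimately show ?thesis using M G by linarith
qed

definition F :: "(complex \<times> complex) list \<Rightarrow> complex \<times> complex" where
  "F xs = foldr mult xs (0, 1)"

lemma mult_assoc: "mult (mult x y) z = mult x (mult y z)"
  by (simp add: mult_def algebra_simps)

lemma F_append: "F (xs @ ys) = mult (F xs) (F ys)"
  by (induction xs) (auto simp: F_def mult_def algebra_simps)

lemma F_snd: "\<forall>m\<in>set xs. snd m \<noteq> 0 \<Longrightarrow> snd (F xs) \<noteq> 0"
  by (induction xs) (auto simp: F_def mult_def)

lemma mult_id_half:
  fixes v r w s :: complex
  assumes "v + r * w = 0" "r * s = 1"
  shows "w + s * v = 0 \<and> s * r = 1"
proof -
  have "w = s * r * w" using assms(2) by (simp add: mult.commute)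
  also have "\<dots> = s * (r * w)" by (simp add: mult.assoc)
  also have "r * w = - v" using assms(1) by (simp add: eq_neg_iff_add_eq_0 add.commute)
  finally have "w = - (s * v)" by simp
  then show ?thesis using assms(2) by (simp add: mult.commute)
qed

lemma mult_id_comm:
  shows "mult x y = (0,1) \<longleftrightarrow> mult y x = (0,1)"
proof -
  obtain v r where x: "x = (v, r)" by (cases x)
  obtain w s where y: "y = (w, s)" by (cases y)
  show ?thesis using mult_id_half[of v r w s] mult_id_half[of w s v r]
    by (auto simp: mult_def x y)
qed

lemma F_rotate1:
  assumes "\<forall>m\<in>set xs. snd m \<noteq> 0"
  shows "F (rotate1 xs) = (0,1) \<longleftrightarrow> F xs = (0,1)"
proof (cases xs)
  case Nil then show ?thesis by simp
next
  case (Cons x ys)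
  have "F (rotate1 xs) = mult (F ys) (F [x])" by (simp add: Cons F_append)
  moreover have "F xs = mult (F [x]) (F ys)" using F_append[of "[x]" ys] by (simp add: Cons)
  moreover have "snd (F ys) \<noteq> 0" "snd (F [x]) \<noteq> 0" using assms F_snd[of ys] F_snd[of "[x]"] by (auto simp: Cons)
  ultimately show ?thesis using mult_id_comm by metis
qed

lemma F_rotate:
  assumes "\<forall>m\<in>set xs. snd m \<noteq> 0"
  shows "F (rotate n xs) = (0,1) \<longleftrightarrow> F xs = (0,1)"
  using assms
proof (induction n)
  case 0 then show ?case by simp
next
  case (Suc n)
  then show ?case using F_rotate1[of "rotate n xs"] by simp
qed

lemma list_props:
  assumes "xs \<noteq> []" "\<forall>A\<in>set xs. good A"
  shows "good (concat_list xs) \<and> mot (concat_list xs) = F (map mot xs)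
    \<and> bA (concat_list xs) - aA (concat_list xs) = sum_list (map (\<lambda>A. bA A - aA A) xs)
    \<and> (length xs \<ge> 2 \<longrightarrow> aA (concat_list xs) = 0)"
  using assms
proof (induction xs rule: concat_list.induct)
  case 1 then show ?case by simp
next
  case (2 A) then show ?case by (simp add: F_def mult_def mot_def)
next
  case (3 A B As)
  then have IH: "good (concat_list (B # As)) \<and> mot (concat_list (B # As)) = F (map mot (B # As))
    \<and> bA (concat_list (B # As)) - aA (concat_list (B # As)) = sum_list (map (\<lambda>A. bA A - aA A) (B # As))"
    by simp
  have gA: "good A" using 3 by simp
  have "F (map mot (A # B # As)) = mult (mot A) (F (map mot (B # As)))" by (simp add: F_def)
  then show ?case using concat_props[OF gA conjunct1[OF IH]] IH by simp
qed

lemma closed_iff: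
  assumes "good A" "aA A = 0" "bA A = 1"
  shows "closed_arc A \<longleftrightarrow> mot A = (0,1)"
proof -
  obtain p d a b where A: "A = (p, d, a, b)" by (cases A) auto
  have "d 0 \<noteq> 0" using assms by (simp add: A good_def aA_def dA_def)
  then show ?thesis using assms by (auto simp: A closed_arc_def mot_def aA_def bA_def dA_def pA_def)
qed

lemma sum_list_rotate: "sum_list (rotate n (xs :: real list)) = sum_list xs"
proof (induction n)
  case 0 then show ?case by simp
next
  case (Suc n)
  have "sum_list (rotate1 ys) = sum_list ys" for ys :: "real list"
    by (cases ys) (simp_all add: add.commute)
  then show ?case using Suc by simp
qed

lemma rotate_closed:
  assumes "length xs \<ge> 2" "\<forall>A\<in>set xs. good A" "sum_list (map (\<lambda>A. bA A - aA A) xs) = 1"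
  shows "closed_arc (concat_list (rotate n xs)) \<longleftrightarrow> closed_arc (concat_list xs)"
proof -
  have ne: "xs \<noteq> []" using assms by auto
  have g2: "\<forall>A\<in>set (rotate n xs). good A" using assms by simp
  have ne2: "rotate n xs \<noteq> []" using ne by simp
  note L1 = list_props[OF ne assms(2)]
  note L2 = list_props[OF ne2 g2]
  have s2: "sum_list (map (\<lambda>A. bA A - aA A) (rotate n xs)) = 1"
    using assms(3) sum_list_rotate[of n] by (simp add: rotate_map[symmetric])
  have c1: "closed_arc (concat_list xs) \<longleftrightarrow> F (map mot xs) = (0,1)"
    using L1 assms closed_iff[of "concat_list xs"] by simp
  have c2: "closed_arc (concat_list (rotate n xs)) \<longleftrightarrow> F (rotate n (map mot xs)) = (0,1)"
    using L2 assms s2 closed_iff[of "concat_list (rotate n xs)"] by (simp add: rotate_map)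
  have nz: "\<forall>m\<in>set (map mot xs). snd m \<noteq> 0"
    using assms(2) by (auto simp: mot_def good_def)
  show ?thesis using c1 c2 F_rotate[OF nz] by simp
qed

lemma Dk_mono: "in_Dk k c \<Longrightarrow> i \<le> j \<Longrightarrow> j \<le> k \<Longrightarrow> c i \<le> c j"
proof (induction j)
  case 0 then show ?case by simp
next
  case (Suc j)
  then show ?case unfolding in_Dk_def
    by (metis Suc_le_eq le_Suc_eq order_trans Suc_leD order_refl)
qed

lemma telescope: "(\<Sum>i\<in>{1..(n::nat)}. (c i - c (i - 1) :: real)) = c n - c 0"
  by (induction n) simp_all

lemma zrot_map: "h < k \<Longrightarrow> map (zrot k h) [1..<k+1] = rotate h [1..<k+1]"
proof (rule nth_equalityI)
  assume hk: "h < k"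
  show "length (map (zrot k h) [1..<k+1]) = length (rotate h [1..<k+1])" by simp
  fix n assume "n < length (map (zrot k h) [1..<k+1])"
  then have n: "n < k" by (simp del: upt_Suc)
  have "rotate h [1..<k+1] ! n = [1..<k+1] ! ((n + h) mod k)"
    using n nth_rotate[of n "[1..<k+1]" h] by (simp add: add.commute del: upt_Suc)
  also have "\<dots> = (n + h) mod k + 1" using n by (simp add: add.commute del: upt_Suc)
  finally have r: "rotate h [1..<k+1] ! n = (n + h) mod k + 1" .
  have mapn: "map (zrot k h) [1..<k+1] ! n = zrot k h (n + 1)" using n by (simp del: upt_Suc)
  show "map (zrot k h) [1..<k+1] ! n = rotate h [1..<k+1] ! n"
  proof (cases "n + 1 \<le> k - h")
    case True
    then have "(n + h) mod k = n + h" using hk by simp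
    then show ?thesis using r n True by (simp only: mapn zrot_def) simp
  next
    case False
    then have "(n + h) mod k = n + h - k" using hk n
      by (simp add: mod_if)
    then show ?thesis using r n False hk by (simp only: mapn zrot_def) simp
  qed
qed

theorem lemma4p3:
  fixes \<gamma> :: "real \<Rightarrow> complex" and \<theta> :: "real \<Rightarrow> real" and c :: real
    and m :: int and k h :: nat and \<sigma> :: "nat \<Rightarrow> nat"
  assumes "C1_curve \<gamma>"
    and "c > 0"
    and "\<forall>t\<in>{0..1}. norm (velocity \<gamma> t) = c"
    and "\<gamma> 0 \<noteq> \<gamma> 1"
    and "continuous_on {0..1} \<theta>"
    and "\<forall>t\<in>{0..1}. velocity \<gamma> t = complex_of_real c * cis (\<theta> t)"
    and "\<theta> 1 - \<theta> 0 = 2 * pi * of_int m"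
    and "m \<noteq> 0"
    and "\<sigma> permutes {1..k}"
    and "h < k"
  shows "rearrangeable k \<gamma> \<sigma> \<longleftrightarrow> rearrangeable k \<gamma> (\<sigma> \<circ> zrot k h)"
proof (cases "h = 0")
  case True
  have "map (\<lambda>j. piece \<gamma> cc ((\<sigma> \<circ> zrot k h) j)) [1..<k+1] = map (\<lambda>j. piece \<gamma> cc (\<sigma> j)) [1..<k+1]" for cc
    by (rule map_cong) (auto simp: zrot_def True)
  then have "rearr \<gamma> k (\<sigma> \<circ> zrot k h) cc = rearr \<gamma> k \<sigma> cc" for cc
    unfolding rearr_def by metis
  then show ?thesis unfolding rearrangeable_def by simp
next
  case False
  then have k2: "k \<ge> 2" using assms(10) by simp
  have eq: "closed_arc (rearr \<gamma> k (\<sigma> \<circ> zrot k h) cc) \<longleftrightarrow> closed_arc (rearr \<gamma> k \<sigma> cc)"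
    if D: "in_Dk k cc" for cc
  proof -
    define xs where "xs = map (\<lambda>j. piece \<gamma> cc (\<sigma> j)) [1..<k+1]"
    have r1: "rearr \<gamma> k \<sigma> cc = concat_list xs" by (simp add: rearr_def xs_def)
    have "map (\<lambda>j. piece \<gamma> cc ((\<sigma> \<circ> zrot k h) j)) [1..<k+1]
        = map (\<lambda>j. piece \<gamma> cc (\<sigma> j)) (map (zrot k h) [1..<k+1])" by simp
    also have "\<dots> = rotate h xs" using zrot_map[OF assms(10)] by (simp add: xs_def rotate_map)
    finally have r2: "rearr \<gamma> k (\<sigma> \<circ> zrot k h) cc = concat_list (rotate h xs)"
      by (simp add: rearr_def)
    have sig: "\<sigma> j \<in> {1..k}" if "j \<in> {1..k}" for j
      using permutes_in_image[OF assms(9)] that by blast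
    have gp: "good (piece \<gamma> cc i)" if i: "i \<in> {1..k}" for i
    proof -
      have a: "cc (i - 1) \<le> cc i" using Dk_mono[OF D, of "i - 1" i] i by simp
      have "cc 0 \<le> cc (i - 1)" "cc i \<le> cc k" using Dk_mono[OF D] i by auto
      then have r: "cc (i - 1) \<in> {0..1}" "cc i \<in> {0..1}" using D a unfolding in_Dk_def by auto
      have v: "velocity \<gamma> t \<noteq> 0" if "t \<in> {0..1}" for t
        using assms(2,3) that by force
      have "sgn (velocity \<gamma> (cc (i - 1))) \<noteq> 0" "sgn (velocity \<gamma> (cc i)) \<noteq> 0"
        using v[OF r(1)] v[OF r(2)] by (simp_all add: sgn_zero_iff)
      then show ?thesis using a
        by (simp add: good_def piece_def aA_def bA_def dA_def)
    qed
    have gx: "\<forall>A\<in>set xs. good A" using gp sig by (auto simp: xs_def)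
    have lx: "length xs \<ge> 2" using k2 by (simp add: xs_def)
    have "sum_list (map (\<lambda>A. bA A - aA A) xs) = sum_list (map (\<lambda>j. cc (\<sigma> j) - cc (\<sigma> j - 1)) [1..<k+1])"
      by (simp add: xs_def piece_def aA_def bA_def o_def)
    also have "\<dots> = (\<Sum>j\<in>{1..k}. cc (\<sigma> j) - cc (\<sigma> j - 1))"
      by (simp add: sum_list_distinct_conv_sum_set atLeastLessThanSuc_atLeastAtMost del: upt_Suc)
    also have "\<dots> = (\<Sum>i\<in>{1..k}. cc i - cc (i - 1))"
      using sum.permute[OF assms(9), of "\<lambda>i. cc i - cc (i - 1)"] by (simp add: o_def)
    also have "\<dots> = 1" using telescope[of cc k] D by (simp add: in_Dk_def)
    finally have sx: "sum_list (map (\<lambda>A. bA A - aA A) xs) = 1" .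
    show ?thesis using rotate_closed[OF lx gx sx] r1 r2 by simp
  qed
  show ?thesis unfolding rearrangeable_def using eq by blast
qed

end
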